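(* For each site $j$ of a lattice, let $a_{j\sigma}, b_{j\sigma}, c_{j\sigma}$ ($\sigma\in\{\uparrow,\downarrow\}$) be fermionic annihilation operators for the $d_{yz}, d_{zx}, d_{xy}$ orbitals, and let $\psi_{j\tau\sigma}$ ($\tau,\sigma\in\{\uparrow,\downarrow\}$) be fermionic annihilation operators forming the four-component spinor $\psi_j=(\psi_{j\uparrow\uparrow},\psi_{j\uparrow\downarrow},\psi_{j\downarrow\uparrow},\psi_{j\downarrow\downarrow})^t$. Substitute $$a_{j\sigma}^\dagger \to \frac{\sigma}{\sqrt6}\bigl(\psi_{j\uparrow\bar\sigma}^\dagger-\sqrt3\,\psi_{j\downarrow\sigma}^\dagger\bigr),\quad b_{j\sigma}^\dagger\to\frac{i}{\sqrt6}\bigl(\psi_{j\uparrow\bar\sigma}^\dagger+\sqrt3\,\psi_{j\downarrow\sigma}^\dagger\bigr),\quad c_{j\sigma}^\dagger\to\sqrt{\tfrac23}\,\psi_{j\uparrow\sigma}^\dagger$$ (and the Hermitian conjugate substitutions for the annihilation operators), where $\sigma=\pm1$ for $\uparrow,\downarrow$ in the prefactor and $\bar\sigma$ is the spin opposite to $\sigma$. Then for every bond $\langle ij\rangle$ of type $\alpha\in\{a,b,c\}$, with $(\alpha,\beta,\gamma)$ the cyclic permutation of $(a,b,c)$ starting at $\alpha$, $$-t\sum_\sigma\bigl(\beta_{i\sigma}^\dagger\gamma_{j\sigma}+\gamma_{i\sigma}^\dagger\beta_{j\sigma}\bigr)\;\longmapsto\;-\frac{t}{\sqrt3}\,\psi_i^\dagger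 U^\alpha\psi_j,$$ where $U^a=\tau^y\otimes I_2$, $U^b=-\tau^x\otimes\sigma^z$, $U^c=-\tau^x\otimes\sigma^y$, with $\boldsymbol\tau$ and $\boldsymbol\sigma$ Pauli matrices acting on the first and second index of $\psi_{j\tau\sigma}$ respectively, and $t\in\mathbb R$.
   Context: The orbital letters $a,b,c$ denote $d_{yz},d_{zx},d_{xy}$; a bond of type $\alpha$ is one whose superexchange path lies in the plane labelled by $\alpha$ ($a$: $yz$-plane, $b$: $zx$-plane, $c$: $xy$-plane). In the spinor $\psi_{j\tau\sigma}$, the first index $\tau$ is the pseudo-orbital and the second index $\sigma$ is the pseudospin; $(\psi_{\uparrow\uparrow},\psi_{\uparrow\downarrow},\psi_{\downarrow\uparrow},\psi_{\downarrow\downarrow})$ correspond to the $J_{\mathrm{eff}}=3/2$ states $J^z=3/2,-3/2,1/2,-1/2$. The matrices $U^a,U^b,U^c$ are Hermitian and unitary, and the $4\times4$ matrices act on $\psi_j$ in the basis ordering $(\uparrow\uparrow,\uparrow\downarrow,\downarrow\uparrow,\downarrow\downarrow)$ with $\tau$ the first tensor factor. *)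

theory Defs
  imports Complex_Main
begin

datatype spin = Up | Dn
datatype orb = OA | OB | OC   (* a = d_yz, b = d_zx, c = d_xy; also used for bond types *)

definition flip :: "spin \<Rightarrow> spin" where
  "flip s = (case s of Up \<Rightarrow> Dn | Dn \<Rightarrow> Up)"

definition ssign :: "spin \<Rightarrow> complex" where
  "ssign s = (case s of Up \<Rightarrow> 1 | Dn \<Rightarrow> -1)"

(* cyclic successor: (alpha, beta, gamma) = (alpha, nxt alpha, nxt (nxt alpha)) *)
definition nxt :: "orb \<Rightarrow> orb" where
  "nxt x = (case x of OA \<Rightarrow> OB | OB \<Rightarrow> OC | OC \<Rightarrow> OA)"

definition ind :: "bool \<Rightarrow> complex" where
  "ind b = (if b then 1 else 0)"

(* coefficient of psi^dagger_{j tau s} in the substitution for the creation operator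
   of orbital o with spin sg *)
definition coef :: "orb \<Rightarrow> spin \<Rightarrow> spin \<Rightarrow> spin \<Rightarrow> complex" where
  "coef ob sg tau s = (case ob of
      OA \<Rightarrow> ssign sg / sqrt 6 * (ind (tau = Up \<and> s = flip sg) - sqrt 3 * ind (tau = Dn \<and> s = sg))
    | OB \<Rightarrow> \<i> / sqrt 6 * (ind (tau = Up \<and> s = flip sg) + sqrt 3 * ind (tau = Dn \<and> s = sg))
    | OC \<Rightarrow> sqrt (2/3) * ind (tau = Up \<and> s = sg))"

(* Operators live in an arbitrary ring 'a; complex scalars enter through of_c.
   Substituted creation / annihilation operators of orbital o, spin sg at site j. *)
definition orb_dag :: "(complex \<Rightarrow> 'a::ring_1) \<Rightarrow> ('site \<Rightarrow> spin \<Rightarrow> spin \<Rightarrow> 'a)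
     \<Rightarrow> orb \<Rightarrow> 'site \<Rightarrow> spin \<Rightarrow> 'a" where
  "orb_dag of_c psi_dag ob j sg =
     (\<Sum>tau\<in>{Up,Dn}. \<Sum>s\<in>{Up,Dn}. of_c (coef ob sg tau s) * psi_dag j tau s)"

definition orb_ann :: "(complex \<Rightarrow> 'a::ring_1) \<Rightarrow> ('site \<Rightarrow> spin \<Rightarrow> spin \<Rightarrow> 'a)
     \<Rightarrow> orb \<Rightarrow> 'site \<Rightarrow> spin \<Rightarrow> 'a" where
  "orb_ann of_c psi ob j sg =
     (\<Sum>tau\<in>{Up,Dn}. \<Sum>s\<in>{Up,Dn}. of_c (cnj (coef ob sg tau s)) * psi j tau s)"

(* Pauli matrices, index Up = first row/column *)
definition pauliX :: "spin \<Rightarrow> spin \<Rightarrow> complex" where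
  "pauliX r c = (if r = c then 0 else 1)"
definition pauliY :: "spin \<Rightarrow> spin \<Rightarrow> complex" where
  "pauliY r c = (if r = c then 0 else if r = Up then - \<i> else \<i>)"
definition pauliZ :: "spin \<Rightarrow> spin \<Rightarrow> complex" where
  "pauliZ r c = (if r \<noteq> c then 0 else if r = Up then 1 else -1)"
definition id2 :: "spin \<Rightarrow> spin \<Rightarrow> complex" where
  "id2 r c = (if r = c then 1 else 0)"

(* U^alpha as a 4x4 matrix indexed by (tau,sigma) pairs; tensor product entries *)
definition Umat :: "orb \<Rightarrow> spin \<Rightarrow> spin \<Rightarrow> spin \<Rightarrow> spin \<Rightarrow> complex" where
  "Umat al tau s tau' s' = (case al of
      OA \<Rightarrow> pauliY tau tau' * id2 s s'
    | OB \<Rightarrow> - (pauliX tau tau' * pauliZ s s')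
    | OC \<Rightarrow> - (pauliX tau tau' * pauliY s s'))"

definition bilin :: "(complex \<Rightarrow> 'a::ring_1) \<Rightarrow> ('site \<Rightarrow> spin \<Rightarrow> spin \<Rightarrow> 'a)
    \<Rightarrow> ('site \<Rightarrow> spin \<Rightarrow> spin \<Rightarrow> 'a) \<Rightarrow> (spin \<Rightarrow> spin \<Rightarrow> spin \<Rightarrow> spin \<Rightarrow> complex)
    \<Rightarrow> 'site \<Rightarrow> 'site \<Rightarrow> 'a" where
  "bilin of_c psi_dag psi M i j =
     (\<Sum>tau\<in>{Up,Dn}. \<Sum>s\<in>{Up,Dn}. \<Sum>tau'\<in>{Up,Dn}. \<Sum>s'\<in>{Up,Dn}.
        psi_dag i tau s * of_c (M tau s tau' s') * psi j tau' s')"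

end

theory Submission imports Defs begin
lemma coefK:
  fixes tau s tau' s' :: spin
  shows "(\<Sum>sg\<in>{Up,Dn}. coef (nxt al) sg tau s * cnj (coef (nxt (nxt al)) sg tau' s')
            + coef (nxt (nxt al)) sg tau s * cnj (coef (nxt al) sg tau' s'))
        = Umat al tau s tau' s' / complex_of_real (sqrt 3)"
proof -
  have s6: "sqrt 6 = sqrt 2 * sqrt 3" by (simp flip: real_sqrt_mult)
  have s23: "sqrt (2/3) = sqrt 2 / sqrt 3" by (simp add: real_sqrt_divide)
  have s2: "sqrt 2 * sqrt 2 = 2" "sqrt 3 * sqrt 3 = 3" by simp_all
  show ?thesis
  by (cases al; cases tau; cases s; cases tau'; cases s')
     (simp_all add: coef_def nxt_def Umat_def pauliX_def pauliY_def pauliZ_def id2_def ind_def flip_def ssign_def s6 s23 field_simps complex_eq_iff)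
qed

lemma D:
  fixes of_c :: "complex \<Rightarrow> 'a::ring_1"
  assumes mult: "\<And>x y. of_c (x * y) = of_c x * of_c y"
    and central: "\<And>z x. of_c z * x = x * of_c z"
  shows "orb_dag of_c psi_dag o1 i sg * orb_ann of_c psi o2 j sg =
   (\<Sum>tau\<in>{Up,Dn}. \<Sum>s\<in>{Up,Dn}. \<Sum>tau'\<in>{Up,Dn}. \<Sum>s'\<in>{Up,Dn}.
        psi_dag i tau s * of_c (coef o1 sg tau s * cnj (coef o2 sg tau' s')) * psi j tau' s')"
proof -
  have r: "of_c a * x * (of_c b * y) = x * of_c (a*b) * y" for a b x y
    by (metis central mult mult.assoc)
  show ?thesis unfolding orb_dag_def orb_ann_def sum_distrib_left sum_distrib_right
    by (simp add: r)
qed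

theorem mainTheorem1:
  fixes of_c :: "complex \<Rightarrow> 'a::ring_1"
    and psi_dag psi :: "'site \<Rightarrow> spin \<Rightarrow> spin \<Rightarrow> 'a"
    and t :: real and i j :: 'site and al :: orb
  assumes add: "\<And>x y. of_c (x + y) = of_c x + of_c y"
    and mult: "\<And>x y. of_c (x * y) = of_c x * of_c y"
    and one: "of_c 1 = 1"
    and central: "\<And>z x. of_c z * x = x * of_c z"
  shows "- of_c (complex_of_real t) *
           (\<Sum>sg\<in>{Up,Dn}.
              orb_dag of_c psi_dag (nxt al) i sg * orb_ann of_c psi (nxt (nxt al)) j sg
            + orb_dag of_c psi_dag (nxt (nxt al)) i sg * orb_ann of_c psi (nxt al) j sg)
         = - of_c (complex_of_real (t / sqrt 3)) * bilin of_c psi_dag psi (Umat al) i j"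
proof -
  let ?T = "\<lambda>F. (\<Sum>tau\<in>{Up,Dn}. \<Sum>s\<in>{Up,Dn}. \<Sum>tau'\<in>{Up,Dn}. \<Sum>s'\<in>{Up,Dn}.
        psi_dag i tau s * of_c (F tau s tau' s') * psi j tau' s')"
  have lin: "?T F + ?T G = ?T (\<lambda>a b c d. F a b c d + G a b c d)" for F G
    by (simp add: add algebra_simps)
  have sc: "of_c z * ?T F = ?T (\<lambda>a b c d. z * F a b c d)" for z F
  proof -
    have r: "of_c z * (x * of_c a * y) = x * of_c (z*a) * y" for a x y
      by (metis central mult mult.assoc)
    show ?thesis by (simp add: distrib_left r)
  qed
  have neg: "- of_c z = of_c (- z)" for z
    by (metis add add.right_neutral add_left_cancel neg_eq_iff_add_eq_0 add.right_inverse)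
  let ?K = "\<lambda>sg tau s tau' s'. coef (nxt al) sg tau s * cnj (coef (nxt (nxt al)) sg tau' s')
            + coef (nxt (nxt al)) sg tau s * cnj (coef (nxt al) sg tau' s')"
  have sumUD: "sum g {Up,Dn} = g Up + g Dn" for g :: "spin \<Rightarrow> 'a" by simp
  have "(\<Sum>sg\<in>{Up,Dn}.
              orb_dag of_c psi_dag (nxt al) i sg * orb_ann of_c psi (nxt (nxt al)) j sg
            + orb_dag of_c psi_dag (nxt (nxt al)) i sg * orb_ann of_c psi (nxt al) j sg)
        = (\<Sum>sg\<in>{Up,Dn}. ?T (\<lambda>tau s tau' s'. ?K sg tau s tau' s'))"
    by (rule sum.cong[OF refl]) (simp only: D[OF mult central] lin)
  also have "\<dots> = ?T (\<lambda>tau s tau' s'. ?K Up tau s tau' s') + ?T (\<lambda>tau s tau' s'. ?K Dn tau s tau' s')"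
    by (rule sumUD)
  also have "\<dots> = ?T (\<lambda>tau s tau' s'. Umat al tau s tau' s' / complex_of_real (sqrt 3))"
    unfolding lin coefK[symmetric] by (simp add: add_ac)
  finally have L: "(\<Sum>sg\<in>{Up,Dn}.
              orb_dag of_c psi_dag (nxt al) i sg * orb_ann of_c psi (nxt (nxt al)) j sg
            + orb_dag of_c psi_dag (nxt (nxt al)) i sg * orb_ann of_c psi (nxt al) j sg)
        = ?T (\<lambda>tau s tau' s'. Umat al tau s tau' s' / complex_of_real (sqrt 3))" .
  show ?thesis unfolding L bilin_def neg sc
    by (simp add: field_simps)
qed
end
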